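(* Fix $1\le r<\infty$, $d\in\mathbb{N}$ and $\varepsilon>0$. Let $a=\lceil(32/\varepsilon+2)^r\rceil$, $k_j=a^{j-1}$, and $Q=\{k_{2j}\}_{j=1}^\infty$. Then for all $\bar m\in[Q]^d$, all $k\in Q$ with $k>m_d$, and all step preserving maps $F\colon S^+_{\ell_\infty^k}\to S^+_{\ell_r^k}$ with $\omega_F(\tfrac1d)\le\tfrac\varepsilon8$, we have \[\Big\|F(z(\bar m))-\frac1{k^{1/r}}\sum_{i=1}^ke_i\Big\|_r\le\varepsilon,\] where $(e_i)_{i=1}^k$ is the standard basis of $\mathbb{R}^k$.
   Context: $S^+_{\ell_p^k}=\{x\in\mathbb{R}^k:\|x\|_p=1,\ x_i\ge0\ \forall i\}$. $[Q]^d$ is the set of increasing $d$-tuples from $Q$; with $m_0=0$, $z(\bar m)=\sum_{s=1}^d(1-\frac{s-1}{d})1_{(m_{s-1},m_s]}$, where $1_{(a,b]}$ is the indicator vector of $\{i:a<i\le b\}$. $F=(F_i)$ is step preserving if $x_i=x_j$ implies $F_i(x)=F_j(x)$. $\omega_F(t)=\sup\{\|F(x)-F(y)\|_r:\|x-y\|_\infty\le t\}$. *)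

theory Defs
  imports Complex_Main
begin

text \<open>Vectors in R^k are represented as functions nat => real, with coordinates
  indexed by {1..k}; elements of the spheres below vanish outside {1..k}.\<close>

definition lp_norm :: "real \<Rightarrow> nat \<Rightarrow> (nat \<Rightarrow> real) \<Rightarrow> real" where
  "lp_norm p k x = (\<Sum>i\<in>{1..k}. \<bar>x i\<bar> powr p) powr (1 / p)"

definition sup_norm :: "nat \<Rightarrow> (nat \<Rightarrow> real) \<Rightarrow> real" where
  "sup_norm k x = Max ((\<lambda>i. \<bar>x i\<bar>) ` {1..k})"

definition pos_sphere_lp :: "real \<Rightarrow> nat \<Rightarrow> (nat \<Rightarrow> real) set" where
  "pos_sphere_lp p k = {x. lp_norm p k x = 1 \<and> (\<forall>i\<in>{1..k}. x i \<ge> 0) \<and> (\<forall>i. i \<notin> {1..k} \<longrightarrow> x i = 0)}"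

definition pos_sphere_linf :: "nat \<Rightarrow> (nat \<Rightarrow> real) set" where
  "pos_sphere_linf k = {x. sup_norm k x = 1 \<and> (\<forall>i\<in>{1..k}. x i \<ge> 0) \<and> (\<forall>i. i \<notin> {1..k} \<longrightarrow> x i = 0)}"

definition step_preserving :: "nat \<Rightarrow> ((nat \<Rightarrow> real) \<Rightarrow> (nat \<Rightarrow> real)) \<Rightarrow> bool" where
  "step_preserving k F \<longleftrightarrow>
     (\<forall>x\<in>pos_sphere_linf k. \<forall>i\<in>{1..k}. \<forall>j\<in>{1..k}. x i = x j \<longrightarrow> F x i = F x j)"

definition modulus :: "real \<Rightarrow> nat \<Rightarrow> ((nat \<Rightarrow> real) \<Rightarrow> (nat \<Rightarrow> real)) \<Rightarrow> real \<Rightarrow> real" where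
  "modulus r k F t = Sup {lp_norm r k (\<lambda>i. F x i - F y i) | x y.
       x \<in> pos_sphere_linf k \<and> y \<in> pos_sphere_linf k \<and> sup_norm k (\<lambda>i. x i - y i) \<le> t}"

definition incr_tuples :: "nat set \<Rightarrow> nat \<Rightarrow> (nat \<Rightarrow> nat) set" where
  "incr_tuples Q d = {m. (\<forall>s\<in>{1..d}. m s \<in> Q) \<and> (\<forall>s\<in>{1..<d}. m s < m (Suc s))}"

text \<open>z(m) with the convention m_0 = 0.\<close>
definition zvec :: "nat \<Rightarrow> (nat \<Rightarrow> nat) \<Rightarrow> nat \<Rightarrow> real" where
  "zvec d m i = (\<Sum>s\<in>{1..d}. (1 - real (s - 1) / real d) *
      (if (if s = 1 then 0 else m (s - 1)) < i \<and> i \<le> m s then 1 else 0))"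

end

theory Submission
  imports Defs "HOL-Analysis.Convex"
begin

definition nrm :: "real \<Rightarrow> nat set \<Rightarrow> (nat \<Rightarrow> real) \<Rightarrow> real" where
  "nrm r S v = (\<Sum>i\<in>S. \<bar>v i\<bar> powr r) powr (1 / r)"

lemma cvx_pt:
  fixes t s l r :: real
  assumes "t \<ge> 0" "s \<ge> 0" "0 \<le> l" "l \<le> 1" "r \<ge> 1"
  shows "(l * t + (1 - l) * s) powr r \<le> l * t powr r + (1 - l) * s powr r"
proof -
  have pw: "x powr r \<le> x" if "0 \<le> x" "x \<le> 1" for x :: real
    using powr_mono'[of 1 r x] that assms by simp
  consider "t > 0" "s > 0" | "t = 0" | "s = 0" using assms by linarith
  then show ?thesis
  proof cases
    case 1
    have "(\<lambda>x. x powr r) ((1 - (1 - l)) *\<^sub>R t + (1 - l) *\<^sub>R s)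
        \<le> (1 - (1 - l)) * (\<lambda>x. x powr r) t + (1 - l) * (\<lambda>x. x powr r) s"
      by (rule convex_onD[OF powr_convex[OF assms(5)]]) (use 1 assms in auto)
    then show ?thesis by simp
  next
    case 2
    have "((1 - l) * s) powr r = (1 - l) powr r * s powr r"
      using assms by (simp add: powr_mult)
    also have "\<dots> \<le> (1 - l) * s powr r"
      using pw[of "1 - l"] assms by (intro mult_right_mono) auto
    finally show ?thesis using 2 assms by simp
  next
    case 3
    have "(l * t) powr r = l powr r * t powr r"
      using assms by (simp add: powr_mult)
    also have "\<dots> \<le> l * t powr r"
      using pw[of "l"] assms by (intro mult_right_mono) auto
    finally show ?thesis using 3 assms by simp
  qed
qed

lemma sum_zero_pw:
  fixes v :: "'a \<Rightarrow> real"
  assumes "finite S" "\<And>i. v i \<ge> 0" "(\<Sum>i\<in>S. v i powr r) = 0" "i \<in> S"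
  shows "v i = 0"
proof -
  have "\<forall>i\<in>S. v i powr r = 0"
    using assms(1,3) sum_nonneg_eq_0_iff[of S "\<lambda>i. v i powr r"] by auto
  then show ?thesis using assms(4) by auto
qed

lemma mink_nonneg:
  fixes a b :: "nat \<Rightarrow> real" and r :: real
  assumes S: "finite S" and r: "r \<ge> 1" and a: "\<And>i. a i \<ge> 0" and b: "\<And>i. b i \<ge> 0"
  shows "(\<Sum>i\<in>S. (a i + b i) powr r) powr (1/r)
     \<le> (\<Sum>i\<in>S. a i powr r) powr (1/r) + (\<Sum>i\<in>S. b i powr r) powr (1/r)"
proof -
  define SA where "SA = (\<Sum>i\<in>S. a i powr r)"
  define SB where "SB = (\<Sum>i\<in>S. b i powr r)"
  define A where "A = SA powr (1/r)"
  define B where "B = SB powr (1/r)"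
  have SA0: "SA \<ge> 0" "SB \<ge> 0" unfolding SA_def SB_def by (auto intro: sum_nonneg)
  have AB0: "A \<ge> 0" "B \<ge> 0" unfolding A_def B_def by auto
  have Ar: "A powr r = SA" "B powr r = SB" unfolding A_def B_def
    using SA0 r by (auto simp: powr_powr)
  show ?thesis
  proof (cases "A = 0 \<or> B = 0")
    case True
    then show ?thesis
    proof
      assume "A = 0"
      then have "SA = 0" unfolding A_def by simp
      then have "\<forall>i\<in>S. a i = 0" using sum_zero_pw[of S a r] S a unfolding SA_def
        by blast
      then have "(\<Sum>i\<in>S. (a i + b i) powr r) = SB" unfolding SB_def by (intro sum.cong) auto
      then have "(\<Sum>i\<in>S. (a i + b i) powr r) powr (1/r) = B" unfolding B_def by simp
      then show ?thesis using \<open>A = 0\<close> unfolding A_def[symmetric] B_def[symmetric] SB_def[symmetric] SA_def[symmetric] by simp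
    next
      assume "B = 0"
      then have "SB = 0" unfolding B_def by simp
      then have "\<forall>i\<in>S. b i = 0" using sum_zero_pw[of S b r] S b unfolding SB_def
        by blast
      then have "(\<Sum>i\<in>S. (a i + b i) powr r) = SA" unfolding SA_def by (intro sum.cong) auto
      then have "(\<Sum>i\<in>S. (a i + b i) powr r) powr (1/r) = A" unfolding A_def by simp
      then show ?thesis using \<open>B = 0\<close> unfolding A_def[symmetric] B_def[symmetric] SB_def[symmetric] SA_def[symmetric] by simp
    qed
  next
    case False
    then have Ap: "A > 0" "B > 0" using AB0 by auto
    define l where "l = A / (A + B)"
    have l: "0 \<le> l" "l \<le> 1" "1 - l = B / (A + B)" using Ap unfolding l_def by (auto simp: field_simps)
    have pt: "((a i + b i) / (A + B)) powr r \<le> l * (a i / A) powr r + (1 - l) * (b i / B) powr r" for i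
    proof -
      have e1: "l * (a i / A) = a i / (A + B)" using Ap unfolding l_def by simp
      have e2: "(1 - l) * (b i / B) = b i / (A + B)" using Ap unfolding l(3) by simp
      have "(a i + b i) / (A + B) = l * (a i / A) + (1 - l) * (b i / B)"
        unfolding e1 e2 by (simp add: add_divide_distrib)
      then show ?thesis using cvx_pt[of "a i / A" "b i / B" l r] a b Ap l r by auto
    qed
    have "(\<Sum>i\<in>S. ((a i + b i) / (A + B)) powr r) \<le> (\<Sum>i\<in>S. l * (a i / A) powr r + (1 - l) * (b i / B) powr r)"
      by (rule sum_mono) (rule pt)
    also have "\<dots> = l * ((\<Sum>i\<in>S. a i powr r) / A powr r) + (1 - l) * ((\<Sum>i\<in>S. b i powr r) / B powr r)"
      by (simp add: sum.distrib sum_distrib_left sum_divide_distrib powr_divide a b Ap less_imp_le)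
    also have "\<dots> = 1"
    proof -
      have "SA \<noteq> 0" "SB \<noteq> 0" using Ar Ap by auto
      then show ?thesis unfolding SA_def[symmetric] SB_def[symmetric] Ar by simp
    qed
    finally have "(\<Sum>i\<in>S. (a i + b i) powr r) / (A + B) powr r \<le> 1"
      by (simp add: powr_divide a b Ap less_imp_le sum_divide_distrib)
    then have "(\<Sum>i\<in>S. (a i + b i) powr r) \<le> (A + B) powr r"
      using Ap by (simp add: divide_le_eq)
    then have "(\<Sum>i\<in>S. (a i + b i) powr r) powr (1/r) \<le> ((A + B) powr r) powr (1/r)"
      by (intro powr_mono2) (use r a b in \<open>auto intro: sum_nonneg\<close>)
    also have "\<dots> = A + B" using Ap r by (simp add: powr_powr)
    finally show ?thesis unfolding A_def B_def SA_def SB_def .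
  qed
qed

lemma mink:
  assumes "finite S" "r \<ge> 1"
  shows "nrm r S (\<lambda>i. v i + w i) \<le> nrm r S v + nrm r S w"
proof -
  have "nrm r S (\<lambda>i. v i + w i) \<le> (\<Sum>i\<in>S. (\<bar>v i\<bar> + \<bar>w i\<bar>) powr r) powr (1/r)"
    unfolding nrm_def using assms
    by (intro powr_mono2 sum_mono powr_mono2) (auto intro: sum_nonneg abs_triangle_ineq)
  also have "\<dots> \<le> nrm r S v + nrm r S w"
    unfolding nrm_def by (rule mink_nonneg) (use assms in auto)
  finally show ?thesis .
qed


lemma Q_gap:
  fixes a :: nat
  assumes a: "a \<ge> 2" and x: "x \<in> {a ^ (2 * j - 1) | j. j \<ge> 1}"
    and y: "y \<in> {a ^ (2 * j - 1) | j. j \<ge> 1}" and xy: "x < y"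
  shows "a^2 * x \<le> y"
proof -
  obtain i where i: "x = a ^ (2 * i - 1)" "i \<ge> 1" using x by auto
  obtain j where j: "y = a ^ (2 * j - 1)" "j \<ge> 1" using y by auto
  have "2 * i - 1 < 2 * j - 1" using xy i j a by (simp add: power_strict_increasing_iff)
  then have "2 + (2 * i - 1) \<le> 2 * j - 1" using i(2) j(2) by arith
  then have "a ^ (2 + (2 * i - 1)) \<le> y" unfolding j using a by (intro power_increasing) auto
  then show ?thesis unfolding i by (simp add: power_add power2_eq_square mult.assoc)
qed

lemma Q_pos:
  fixes a :: nat
  assumes a: "a \<ge> 2" and x: "x \<in> {a ^ (2 * j - 1) | j. j \<ge> 1}"
  shows "x \<ge> 1"
  using x a by auto

lemma incr_mono:
  assumes "\<forall>s\<in>{1..<d}. m s < (m (Suc s) :: nat)"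
  shows "1 \<le> s \<Longrightarrow> s \<le> t \<Longrightarrow> t \<le> d \<Longrightarrow> m s \<le> m t"
proof (induction t)
  case 0
  then show ?case by simp
next
  case (Suc t)
  show ?case
  proof (cases "s = Suc t")
    case True then show ?thesis by simp
  next
    case False
    then have "s \<le> t" using Suc by simp
    then have "m s \<le> m t" using Suc by simp
    moreover have "m t < m (Suc t)" using assms Suc \<open>s \<le> t\<close> by auto
    ultimately show ?thesis by simp
  qed
qed

definition Lv :: "nat \<Rightarrow> (nat \<Rightarrow> nat) \<Rightarrow> nat \<Rightarrow> nat" where
  "Lv d m i = Max (insert 0 {t\<in>{1..d}. m t < i})"

lemma Lv_le: "Lv d m i \<le> d"
  unfolding Lv_def by (subst Max_le_iff) auto

lemma Lv_char:
  assumes mono: "\<forall>s t. 1 \<le> s \<longrightarrow> s \<le> t \<longrightarrow> t \<le> d \<longrightarrow> m s \<le> m t"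
    and t: "t \<in> {1..d}"
  shows "(m t < i) = (t \<le> Lv d m i)"
proof
  assume "m t < i"
  then show "t \<le> Lv d m i" unfolding Lv_def using t by (intro Max_ge) auto
next
  assume h: "t \<le> Lv d m i"
  have "Lv d m i \<in> insert 0 {t\<in>{1..d}. m t < i}" unfolding Lv_def by (intro Max_in) auto
  moreover have "Lv d m i \<noteq> 0" using h t by auto
  ultimately have "Lv d m i \<in> {1..d}" "m (Lv d m i) < i" by auto
  moreover have "m t \<le> m (Lv d m i)" using mono h t \<open>Lv d m i \<in> {1..d}\<close> by auto
  ultimately show "m t < i" by simp
qed

lemma Lv_eq:
  assumes mono: "\<forall>s t. 1 \<le> s \<longrightarrow> s \<le> t \<longrightarrow> t \<le> d \<longrightarrow> m s \<le> m t"
    and l: "l \<le> d" and h: "\<forall>t\<in>{1..d}. (m t < i) = (t \<le> l)"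
  shows "Lv d m i = l"
proof (rule ccontr)
  assume ne: "Lv d m i \<noteq> l"
  show False
  proof (cases "l < Lv d m i")
    case True
    then have t: "Lv d m i \<in> {1..d}" using Lv_le[of d m i] by auto
    then have "m (Lv d m i) < i" using Lv_char[OF mono t] by simp
    then show False using h t True by auto
  next
    case False
    then have t: "l \<in> {1..d}" using ne l by auto
    then have "m l < i" using h by auto
    then have "l \<le> Lv d m i" using Lv_char[OF mono t] by simp
    then show False using False ne by simp
  qed
qed

lemma zvec_char:
  assumes mono: "\<forall>s t. 1 \<le> s \<longrightarrow> s \<le> t \<longrightarrow> t \<le> d \<longrightarrow> m s \<le> m t"
    and d: "d \<ge> 1" and i: "i \<ge> 1"
  shows "zvec d m i = real (d - Lv d m i) / real d"
proof -
  define L where "L = Lv d m i"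
  have c: "((if s = 1 then 0 else m (s - 1)) < i \<and> i \<le> m s) = (s = L + 1)" if s: "s \<in> {1..d}" for s
  proof (cases "s = 1")
    case True
    have "(m s < i) = (s \<le> L)" unfolding L_def by (rule Lv_char[OF mono s])
    then show ?thesis using True i by auto
  next
    case False
    then have s1: "s - 1 \<in> {1..d}" using s by auto
    have "(m (s-1) < i) = (s - 1 \<le> L)" unfolding L_def by (rule Lv_char[OF mono s1])
    moreover have "(m s < i) = (s \<le> L)" unfolding L_def by (rule Lv_char[OF mono s])
    ultimately show ?thesis using False s by auto
  qed
  have "zvec d m i = (\<Sum>s\<in>{1..d}. if s = L + 1 then 1 - real (s - 1) / real d else 0)"
    unfolding zvec_def
  proof (rule sum.cong[OF refl])
    fix s assume s: "s \<in> {1..d}"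
    show "(1 - real (s - 1) / real d) * (if (if s = 1 then 0 else m (s - 1)) < i \<and> i \<le> m s then 1 else 0)
        = (if s = L + 1 then 1 - real (s - 1) / real d else 0)"
      using c[OF s] by simp
  qed
  also have "\<dots> = (if L + 1 \<in> {1..d} then 1 - real L / real d else 0)"
    by (simp add: sum.delta)
  also have "\<dots> = real (d - L) / real d"
    using Lv_le[of d m i] d unfolding L_def[symmetric] by (auto simp: field_simps of_nat_diff)
  finally show ?thesis unfolding L_def .
qed


lemma nrm_cong: "(\<And>i. i \<in> S \<Longrightarrow> v i = w i) \<Longrightarrow> nrm r S v = nrm r S w"
  unfolding nrm_def by (metis (no_types, lifting) sum.cong)

lemma nrm_mono_set:
  assumes "finite T" "S \<subseteq> T" "r > 0"
  shows "nrm r S v \<le> nrm r T v"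
  unfolding nrm_def using assms
  by (intro powr_mono2 sum_mono2) (auto intro: sum_nonneg)

lemma nrm_restrict:
  assumes "finite T" "S \<subseteq> T" "r > 0"
  shows "nrm r T (\<lambda>i. if i \<in> S then v i else 0) = nrm r S v"
proof -
  have "(\<Sum>i\<in>T. \<bar>if i \<in> S then v i else 0\<bar> powr r) = (\<Sum>i\<in>T. if i \<in> S then \<bar>v i\<bar> powr r else 0)"
    by (intro sum.cong) auto
  also have "\<dots> = (\<Sum>i\<in>T \<inter> S. \<bar>v i\<bar> powr r)"
    using assms by (simp add: sum.inter_restrict)
  also have "T \<inter> S = S" using assms by auto
  finally show ?thesis unfolding nrm_def by simp
qed

lemma nrm_split:
  assumes "finite T" "S \<subseteq> T" "r \<ge> 1"
  shows "nrm r T v \<le> nrm r S v + nrm r (T - S) v"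
proof -
  have "nrm r T v = nrm r T (\<lambda>i. (if i \<in> S then v i else 0) + (if i \<in> T - S then v i else 0))"
    by (rule nrm_cong) auto
  also have "\<dots> \<le> nrm r T (\<lambda>i. if i \<in> S then v i else 0) + nrm r T (\<lambda>i. if i \<in> T - S then v i else 0)"
    by (rule mink) (use assms in auto)
  also have "nrm r T (\<lambda>i. if i \<in> S then v i else 0) = nrm r S v"
    by (rule nrm_restrict) (use assms in auto)
  also have "nrm r T (\<lambda>i. if i \<in> T - S then v i else 0) = nrm r (T - S) v"
    by (rule nrm_restrict) (use assms in auto)
  finally show ?thesis .
qed

lemma pw_le:
  fixes x r :: real
  assumes "0 \<le> x" "x \<le> 1" "r \<ge> 1"
  shows "x powr r \<le> x"
  using powr_mono'[of 1 r x] assms by simp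

lemma sum_from_norm:
  assumes "(S :: real) \<ge> 0" "S powr (1/r) = 1" "r > 0"
  shows "S = 1"
proof -
  have "S = (S powr (1/r)) powr r" using assms(1,3) by (simp add: powr_powr)
  then have "S = 1 powr r" by (simp only: assms(2))
  then show ?thesis by simp
qed


lemma root_mono:
  fixes x y r :: real
  assumes "0 \<le> x" "0 \<le> y" "r > 0" "x powr r \<le> y powr r"
  shows "x \<le> y"
proof (rule ccontr)
  assume "\<not> x \<le> y"
  then have "y powr r < x powr r" using assms by (intro powr_less_mono2) auto
  then show False using assms(4) by simp
qed

lemma divmod_uniq:
  fixes i i' j j' M :: nat
  assumes e: "i + j*M = i' + j'*M" and "1 \<le> i" "i \<le> M" "1 \<le> i'" "i' \<le> M"
  shows "j = j' \<and> i = i'"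
proof -
  have "j = j'"
  proof (rule ccontr)
    assume "j \<noteq> j'"
    then consider "Suc j \<le> j'" | "Suc j' \<le> j" by linarith
    then show False
    proof cases
      case 1
      then have "Suc j * M \<le> j' * M" by (rule mult_le_mono1)
      moreover have "Suc j * M = M + j * M" by simp
      ultimately show False using assms by linarith
    next
      case 2
      then have "Suc j' * M \<le> j * M" by (rule mult_le_mono1)
      moreover have "Suc j' * M = M + j' * M" by simp
      ultimately show False using assms by linarith
    qed
  qed
  then show ?thesis using e by simp
qed


theorem theorem6p2:
  fixes r \<epsilon> :: real and d :: nat
  assumes "1 \<le> r" and "d \<ge> 1" and "\<epsilon> > 0"
  defines "a \<equiv> nat \<lceil>(32 / \<epsilon> + 2) powr r\<rceil>"
  defines "Q \<equiv> {a ^ (2 * j - 1) | j. j \<ge> 1}"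
  shows "\<forall>m\<in>incr_tuples Q d. \<forall>k\<in>Q. k > m d \<longrightarrow>
           (\<forall>F. F ` pos_sphere_linf k \<subseteq> pos_sphere_lp r k \<longrightarrow> step_preserving k F \<longrightarrow>
              modulus r k F (1 / real d) \<le> \<epsilon> / 8 \<longrightarrow>
              lp_norm r k (\<lambda>i. F (zvec d m) i - 1 / real k powr (1 / r)) \<le> \<epsilon>)"
proof (intro ballI impI allI)
  fix m k F
  assume m: "m \<in> incr_tuples Q d" and k: "k \<in> Q" and km: "m d < k"
    and FS: "F ` pos_sphere_linf k \<subseteq> pos_sphere_lp r k" and sp: "step_preserving k F"
    and md: "modulus r k F (1 / real d) \<le> \<epsilon> / 8"
  have r0: "r > 0" using assms(1-3) by simp
  have d0: "real d > 0" using assms(1-3) by simp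
  define b where "b = 32 / \<epsilon> + 2"
  have b2: "b \<ge> 2" unfolding b_def using assms(1-3) by simp
  have "b \<le> b powr r"
    using powr_mono[of 1 r b] b2 assms by simp
  also have "b powr r \<le> of_int \<lceil>b powr r\<rceil>" by (rule le_of_int_ceiling)
  also have "of_int \<lceil>b powr r\<rceil> = real a"
    unfolding a_def b_def[symmetric] using b2 by simp
  finally have ba: "b \<le> real a" .
  have ba2: "b powr r \<le> real a"
    using le_of_int_ceiling[of "b powr r"] unfolding a_def b_def[symmetric] using b2 by simp
  have a2: "a \<ge> 2" using ba b2 by linarith
  have aroot: "b \<le> real a powr (1/r)"
  proof -
    have "(b powr r) powr (1/r) \<le> real a powr (1/r)"
      using ba2 b2 r0 by (intro powr_mono2) auto
    then show ?thesis using b2 r0 by (simp add: powr_powr)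
  qed
  define \<delta> where "\<delta> = (1 / real a) powr (1/r)"
  have \<delta>0: "\<delta> \<ge> 0" unfolding \<delta>_def by simp
  have \<delta>e: "\<delta> \<le> \<epsilon> / 32"
  proof -
    have "\<delta> = 1 / real a powr (1/r)" unfolding \<delta>_def by (simp add: powr_divide)
    also have "\<dots> \<le> 1 / b" by (rule divide_left_mono) (use aroot b2 a2 in \<open>auto intro!: mult_pos_pos\<close>)
    also have "\<dots> \<le> \<epsilon> / 32"
    proof -
      have eb: "\<epsilon> * b = 32 + 2 * \<epsilon>" unfolding b_def using assms(1-3) by (simp add: distrib_left)
      have b0: "b > 0" using b2 by simp
      have "32 \<le> \<epsilon> * b" using eb assms by linarith
      then show ?thesis using b0 by (simp add: divide_le_eq le_divide_eq mult.commute)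
    qed
    finally show ?thesis .
  qed
  have inva: "1 / real a \<le> \<delta>"
  proof -
    have r1: "1 / r \<le> 1" using assms(1) by simp
    have "(1 / real a) powr 1 \<le> (1 / real a) powr (1 / r)"
      by (rule powr_mono') (use r1 a2 in auto)
    then show ?thesis unfolding \<delta>_def by simp
  qed
  have Qd: "Q = {a ^ (2 * j - 1) | j. j \<ge> 1}" by (simp add: Q_def)
  have mQ: "\<forall>s\<in>{1..d}. m s \<in> Q" and minc: "\<forall>s\<in>{1..<d}. m s < m (Suc s)"
    using m unfolding incr_tuples_def by auto
  have mono: "\<forall>s t. 1 \<le> s \<longrightarrow> s \<le> t \<longrightarrow> t \<le> d \<longrightarrow> m s \<le> m t"
    using incr_mono[OF minc] by blast
  have mpos: "m s \<ge> 1" if "s \<in> {1..d}" for s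
    using Q_pos[OF a2] mQ that unfolding Qd by blast
  have gap: "a^2 * m t \<le> (if t + 1 \<le> d then m (t+1) else k)" if t: "t \<in> {1..d}" for t
  proof (cases "t + 1 \<le> d")
    case True
    then have "m t < m (t+1)" using minc t by auto
    then show ?thesis using True Q_gap[OF a2, of "m t" "m (t+1)"] mQ t unfolding Qd by auto
  next
    case False
    then have "t = d" using t by auto
    then show ?thesis using False Q_gap[OF a2, of "m t" k] mQ t km k unfolding Qd by auto
  qed
  have mdk: "a^2 * m d \<le> k" using gap[of d] assms by auto
  have k1: "k \<ge> 1" using km by simp
  have Lchar: "(m t < i) = (t \<le> Lv d m i)" if "t \<in> {1..d}" for t i
    using Lv_char[OF mono that] .
  have zc: "zvec d m i = real (d - Lv d m i) / real d" if "i \<ge> 1" for i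
    using zvec_char[OF mono assms(2) that] .
  have z0: "zvec d m 0 = 0" by (simp add: zvec_def)
  have L1: "Lv d m 1 = 0"
    by (rule Lv_eq[OF mono]) (use mpos in force)+
  have Lbig: "Lv d m i = d" if "i > m d" for i
  proof (rule Lv_eq[OF mono])
    show "\<forall>t\<in>{1..d}. (m t < i) = (t \<le> d)"
    proof
      fix t assume t: "t \<in> {1..d}"
      then have "m t \<le> m d" using mono by auto
      then show "(m t < i) = (t \<le> d)" using t that by auto
    qed
  qed simp
  have Lsmall: "Lv d m i < d" if "i \<le> m d" for i
  proof -
    have "\<not> m d < i" using that by simp
    then have "\<not> d \<le> Lv d m i" using Lchar[of d i] assms by auto
    then show ?thesis by simp
  qed
  have zS: "zvec d m \<in> pos_sphere_linf k"
  proof -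
    have zv: "0 \<le> zvec d m i \<and> zvec d m i \<le> 1" if "i \<in> {1..k}" for i
    proof -
      have e: "zvec d m i = real (d - Lv d m i) / real d" using zc that by auto
      have "real (d - Lv d m i) \<le> real d" by simp
      then show ?thesis unfolding e using d0 by (simp add: divide_le_eq)
    qed
    have zout: "zvec d m i = 0" if "i \<notin> {1..k}" for i
    proof (cases "i = 0")
      case True then show ?thesis using z0 by simp
    next
      case False
      then have "i > m d" "i \<ge> 1" using that km by auto
      then show ?thesis using zc Lbig by simp
    qed
    have "Max ((\<lambda>i. \<bar>zvec d m i\<bar>) ` {1..k}) = 1"
    proof (rule Max_eqI)
      show "y \<le> 1" if "y \<in> (\<lambda>i. \<bar>zvec d m i\<bar>) ` {1..k}" for y using that zv by auto
      have "\<bar>zvec d m 1\<bar> = 1" using zc[of 1] L1 d0 by simp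
      then show "1 \<in> (\<lambda>i. \<bar>zvec d m i\<bar>) ` {1..k}" using k1 by force
    qed auto
    then show ?thesis unfolding pos_sphere_linf_def sup_norm_def using zv zout by auto
  qed
  define u where "u = F (zvec d m)"
  have sphere_sum: "(\<Sum>i\<in>{1..k}. \<bar>F x i\<bar> powr r) = 1" "nrm r {1..k} (F x) = 1"
     "\<forall>i\<in>{1..k}. F x i \<ge> 0" if "x \<in> pos_sphere_linf k" for x
  proof -
    have "F x \<in> pos_sphere_lp r k" using FS that by auto
    then have n1: "lp_norm r k (F x) = 1" and "\<forall>i\<in>{1..k}. F x i \<ge> 0"
      unfolding pos_sphere_lp_def by auto
    then show "\<forall>i\<in>{1..k}. F x i \<ge> 0" by simp
    show "nrm r {1..k} (F x) = 1" using n1 unfolding lp_norm_def nrm_def .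
    show "(\<Sum>i\<in>{1..k}. \<bar>F x i\<bar> powr r) = 1"
      by (rule sum_from_norm) (use n1 r0 in \<open>auto simp: lp_norm_def intro: sum_nonneg\<close>)
  qed
  have mod_le: "nrm r {1..k} (\<lambda>i. F x i - F y i) \<le> \<epsilon> / 8"
    if xy: "x \<in> pos_sphere_linf k" "y \<in> pos_sphere_linf k" "sup_norm k (\<lambda>i. x i - y i) \<le> 1 / real d" for x y
  proof -
    let ?A = "{lp_norm r k (\<lambda>i. F x i - F y i) | x y.
       x \<in> pos_sphere_linf k \<and> y \<in> pos_sphere_linf k \<and> sup_norm k (\<lambda>i. x i - y i) \<le> 1 / real d}"
    have bd: "bdd_above ?A"
    proof (rule bdd_aboveI)
      fix z assume "z \<in> ?A"
      then obtain x y where z: "z = lp_norm r k (\<lambda>i. F x i - F y i)"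
        and x: "x \<in> pos_sphere_linf k" and y: "y \<in> pos_sphere_linf k" by blast
      have "z = nrm r {1..k} (\<lambda>i. F x i + (- F y i))" unfolding z lp_norm_def nrm_def by simp
      also have "\<dots> \<le> nrm r {1..k} (F x) + nrm r {1..k} (\<lambda>i. - F y i)"
        by (rule mink) (use assms in auto)
      also have "nrm r {1..k} (\<lambda>i. - F y i) = nrm r {1..k} (F y)" unfolding nrm_def by simp
      finally show "z \<le> 2" using sphere_sum(2)[OF x] sphere_sum(2)[OF y] by simp
    qed
    have "lp_norm r k (\<lambda>i. F x i - F y i) \<in> ?A" using xy by blast
    then have "lp_norm r k (\<lambda>i. F x i - F y i) \<le> Sup ?A" using bd by (rule cSup_upper)
    also have "Sup ?A = modulus r k F (1 / real d)" unfolding modulus_def by simp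
    finally show ?thesis using md unfolding lp_norm_def nrm_def by simp
  qed
  have spF: "F x i = F x j" if "x \<in> pos_sphere_linf k" "i \<in> {1..k}" "j \<in> {1..k}" "x i = x j" for x i j
    using sp that unfolding step_preserving_def by blast
  define xp where "xp = (\<lambda>(par::nat) i. if i \<in> {1..k} then real (d - Lv d m i + (if Lv d m i \<ge> 1 \<and> Lv d m i mod 2 = par then 1 else 0)) / real d else 0)"
  define S where "S = (\<lambda>par::nat. {i\<in>{1..m d}. Lv d m i mod 2 \<noteq> par})"
  have key: "nrm r (S par) u \<le> \<delta> + \<epsilon> / 8" if par: "par < 2" for par
  proof -
    let ?x = "xp par"
    have xval: "0 \<le> ?x i \<and> ?x i \<le> 1" if "i \<in> {1..k}" for i
    proof -
      define n where "n = d - Lv d m i + (if Lv d m i \<ge> 1 \<and> Lv d m i mod 2 = par then 1 else 0)"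
      have e: "?x i = real n / real d" using that unfolding xp_def n_def by simp
      have "n \<le> d" using Lv_le[of d m i] unfolding n_def by auto
      then have "real n \<le> real d" by simp
      then show ?thesis unfolding e using d0 by (simp add: divide_le_eq)
    qed
    have xS: "?x \<in> pos_sphere_linf k"
    proof -
      have "Max ((\<lambda>i. \<bar>?x i\<bar>) ` {1..k}) = 1"
      proof (rule Max_eqI)
        show "y \<le> 1" if "y \<in> (\<lambda>i. \<bar>?x i\<bar>) ` {1..k}" for y using that xval by auto
        have "\<bar>?x 1\<bar> = 1" using L1 d0 k1 by (simp add: xp_def)
        then show "1 \<in> (\<lambda>i. \<bar>?x i\<bar>) ` {1..k}" using k1 by force
      qed auto
      then show ?thesis unfolding pos_sphere_linf_def sup_norm_def using xval
        by (auto simp: xp_def)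
    qed
    have xd: "sup_norm k (\<lambda>i. zvec d m i - ?x i) \<le> 1 / real d"
      unfolding sup_norm_def
    proof (subst Max_le_iff)
      show "\<forall>y\<in>(\<lambda>i. \<bar>zvec d m i - ?x i\<bar>) ` {1..k}. y \<le> 1 / real d"
      proof
        fix y assume "y \<in> (\<lambda>i. \<bar>zvec d m i - ?x i\<bar>) ` {1..k}"
        then obtain i where i: "i \<in> {1..k}" and y: "y = \<bar>zvec d m i - ?x i\<bar>" by auto
        have "zvec d m i - ?x i = - (if Lv d m i \<ge> 1 \<and> Lv d m i mod 2 = par then 1 else 0) / real d"
          using i zc[of i] Lv_le[of d m i] d0 by (auto simp: xp_def field_simps)
        then show "y \<le> 1 / real d" unfolding y using d0 by auto
      qed
    qed (use k1 in auto)
    define p where "p = F ?x"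
    have upd: "nrm r {1..k} (\<lambda>i. u i - p i) \<le> \<epsilon> / 8"
      unfolding u_def p_def by (rule mod_le[OF zS xS xd])
    have Sk: "S par \<subseteq> {1..k}" using km by (auto simp: S_def)
    define \<Phi> where "\<Phi> = (\<lambda>(i, j). i + j * m (Lv d m i + 1))"
    have Phi: "m (Lv d m i + 1) < \<Phi> (i, j) \<and> \<Phi> (i, j) \<le> k \<and> Lv d m (\<Phi> (i, j)) = Lv d m i + 1
               \<and> ?x (\<Phi> (i, j)) = ?x i \<and> i \<le> m (Lv d m i + 1) \<and> 1 \<le> i"
      if i: "i \<in> S par" and j: "j \<in> {1..a}" for i j
    proof -
      define l where "l = Lv d m i"
      have i1: "i \<ge> 1" "i \<le> m d" "Lv d m i mod 2 \<noteq> par" using i by (auto simp: S_def)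
      have ld: "l < d" unfolding l_def using Lsmall i1 by simp
      have l1: "l + 1 \<in> {1..d}" using ld by simp
      have ile: "i \<le> m (l + 1)" using Lchar[OF l1, of i] unfolding l_def by auto
      define M where "M = m (l + 1)"
      have M1: "M \<ge> 1" unfolding M_def using mpos l1 by blast
      have Pe: "\<Phi> (i, j) = i + j * M" unfolding \<Phi>_def M_def l_def by simp
      have gt: "M < \<Phi> (i, j)" unfolding Pe using i1 j M1
        by (metis add.commute atLeastAtMost_iff less_add_same_cancel1 linorder_not_le
            mult_le_cancel2 nat_mult_1 not_one_le_zero order.strict_trans1 le_add2 trans_less_add2)
      have jM: "j * M \<le> a * M" using j by (intro mult_right_mono) auto
      have "\<Phi> (i, j) \<le> M + a * M" unfolding Pe using ile jM unfolding M_def by linarith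
      also have "\<dots> = (a + 1) * M" by simp
      also have "\<dots> \<le> a^2 * M"
      proof -
        have "2 * a \<le> a * a" using a2 by (intro mult_right_mono) auto
        then have "a + 1 \<le> a * a" using a2 by linarith
        then have "a + 1 \<le> a^2" by (simp only: power2_eq_square)
        then show ?thesis by (intro mult_right_mono) auto
      qed
      also have "\<dots> \<le> (if l + 2 \<le> d then m (l + 2) else k)" using gap[OF l1] unfolding M_def by (simp only: add.assoc one_add_one)
      finally have le2: "\<Phi> (i, j) \<le> (if l + 2 \<le> d then m (l + 2) else k)" .
      have Pk: "\<Phi> (i, j) \<le> k"
      proof (cases "l + 2 \<le> d")
        case True
        then have "m (l + 2) \<le> m d" using mono by auto
        then show ?thesis using le2 True km by auto
      next
        case False then show ?thesis using le2 by simp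
      qed
      have LP: "Lv d m (\<Phi> (i, j)) = l + 1"
      proof (rule Lv_eq[OF mono])
        show "l + 1 \<le> d" using ld by simp
        show "\<forall>t\<in>{1..d}. (m t < \<Phi> (i, j)) = (t \<le> l + 1)"
        proof
          fix t assume t: "t \<in> {1..d}"
          show "(m t < \<Phi> (i, j)) = (t \<le> l + 1)"
          proof
            assume "m t < \<Phi> (i, j)"
            show "t \<le> l + 1"
            proof (rule ccontr)
              assume "\<not> t \<le> l + 1"
              then have "l + 2 \<le> t" by simp
              then have "m (l + 2) \<le> m t" using mono t by auto
              then show False using le2 \<open>l + 2 \<le> t\<close> t \<open>m t < \<Phi> (i, j)\<close> by auto
            qed
          next
            assume "t \<le> l + 1"
            then have "m t \<le> M" unfolding M_def using mono t l1 by auto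
            then show "m t < \<Phi> (i, j)" using gt by simp
          qed
        qed
      qed
      have par1: "(l + 1) mod 2 = par" using i1(3) par unfolding l_def by presburger
      have dl: "d - (l + 1) + 1 = d - l" using ld by simp
      have xP: "?x (\<Phi> (i, j)) = ?x i"
        using LP par1 dl Pk gt M1 i1 km i1(3) unfolding xp_def l_def[symmetric] by auto
      show ?thesis using gt Pk LP xP ile i1 unfolding M_def l_def by simp
    qed
    have inj: "inj_on \<Phi> (S par \<times> {1..a})"
    proof (rule inj_onI)
      fix x y assume x: "x \<in> S par \<times> {1..a}" and y: "y \<in> S par \<times> {1..a}" and e: "\<Phi> x = \<Phi> y"
      obtain i j where ij: "x = (i, j)" "i \<in> S par" "j \<in> {1..a}" using x by auto
      obtain i' j' where ij': "y = (i', j')" "i' \<in> S par" "j' \<in> {1..a}" using y by auto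
      have "Lv d m i + 1 = Lv d m i' + 1" using Phi[OF ij(2,3)] Phi[OF ij'(2,3)] e ij ij' by metis
      then have LL: "Lv d m i = Lv d m i'" by simp
      have "i + j * m (Lv d m i + 1) = i' + j' * m (Lv d m i + 1)"
        using e ij ij' LL unfolding \<Phi>_def by simp
      then have "j = j' \<and> i = i'"
        using divmod_uniq[of i j "m (Lv d m i + 1)" i' j'] Phi[OF ij(2,3)] Phi[OF ij'(2,3)] LL by auto
      then show "x = y" using ij ij' by simp
    qed
    have pS: "(\<Sum>i\<in>{1..k}. \<bar>p i\<bar> powr r) = 1" unfolding p_def by (rule sphere_sum(1)[OF xS])
    have "real a * (\<Sum>i\<in>S par. \<bar>p i\<bar> powr r) = (\<Sum>i\<in>S par. \<Sum>j\<in>{1..a}. \<bar>p i\<bar> powr r)"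
      by (simp add: sum_distrib_left)
    also have "\<dots> = (\<Sum>i\<in>S par. \<Sum>j\<in>{1..a}. \<bar>p (\<Phi> (i, j))\<bar> powr r)"
    proof (intro sum.cong refl)
      fix i j assume i: "i \<in> S par" and j: "j \<in> {1..a}"
      have "p (\<Phi> (i, j)) = p i" unfolding p_def
        by (rule spF[OF xS]) (use Phi[OF i j] Sk i in auto)
      then show "\<bar>p i\<bar> powr r = \<bar>p (\<Phi> (i, j))\<bar> powr r" by simp
    qed
    also have "\<dots> = (\<Sum>ij\<in>S par \<times> {1..a}. \<bar>p (\<Phi> ij)\<bar> powr r)"
      by (simp add: sum.cartesian_product case_prod_beta)
    also have "\<dots> = (\<Sum>l\<in>\<Phi> ` (S par \<times> {1..a}). \<bar>p l\<bar> powr r)"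
      using sum.reindex[OF inj, of "\<lambda>l. \<bar>p l\<bar> powr r"] by (simp add: comp_def)
    also have "\<dots> \<le> (\<Sum>l\<in>{1..k}. \<bar>p l\<bar> powr r)"
    proof (rule sum_mono2)
      show "\<Phi> ` (S par \<times> {1..a}) \<subseteq> {1..k}"
      proof
        fix l assume "l \<in> \<Phi> ` (S par \<times> {1..a})"
        then obtain i j where "i \<in> S par" "j \<in> {1..a}" "l = \<Phi> (i, j)" by auto
        then show "l \<in> {1..k}" using Phi[of i j] by auto
      qed
    qed auto
    finally have "real a * (\<Sum>i\<in>S par. \<bar>p i\<bar> powr r) \<le> 1" using pS by simp
    then have psum: "(\<Sum>i\<in>S par. \<bar>p i\<bar> powr r) \<le> 1 / real a"
      using a2 by (simp add: field_simps)
    have np: "nrm r (S par) p \<le> \<delta>"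
      unfolding nrm_def \<delta>_def using psum r0 by (intro powr_mono2) (auto intro: sum_nonneg)
    have "nrm r (S par) u = nrm r (S par) (\<lambda>i. p i + (u i - p i))" by simp
    also have "\<dots> \<le> nrm r (S par) p + nrm r (S par) (\<lambda>i. u i - p i)"
      by (rule mink) (use assms in \<open>auto simp: S_def\<close>)
    also have "nrm r (S par) (\<lambda>i. u i - p i) \<le> nrm r {1..k} (\<lambda>i. u i - p i)"
      by (rule nrm_mono_set) (use Sk r0 in auto)
    finally show ?thesis using np upd by simp
  qed
  define D where "D = {1..m d}"
  define T where "T = {m d + 1..k}"
  define \<eta> where "\<eta> = nrm r D u"
  have DS: "D - S 0 = S 1" "S 0 \<subseteq> D" unfolding D_def S_def by auto
  have "\<eta> \<le> nrm r (S 0) u + nrm r (D - S 0) u"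
    unfolding \<eta>_def by (rule nrm_split) (use DS assms in \<open>auto simp: D_def\<close>)
  then have \<eta>b: "\<eta> \<le> 2 * \<delta> + \<epsilon> / 4" using key[of 0] key[of 1] DS by simp
  have uS: "(\<Sum>i\<in>{1..k}. \<bar>u i\<bar> powr r) = 1" "\<forall>i\<in>{1..k}. u i \<ge> 0"
    unfolding u_def using sphere_sum[OF zS] by auto
  have DT: "{1..k} = D \<union> T" "D \<inter> T = {}" "{1..k} - D = T" using km unfolding D_def T_def by auto
  define sD where "sD = (\<Sum>i\<in>D. \<bar>u i\<bar> powr r)"
  define sT where "sT = (\<Sum>i\<in>T. \<bar>u i\<bar> powr r)"
  have sDT: "sD + sT = 1" unfolding sD_def sT_def using uS(1) DT
    by (metis (no_types, lifting) finite_atLeastAtMost sum.union_disjoint D_def T_def)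
  have sD0: "sD \<ge> 0" "sT \<ge> 0" unfolding sD_def sT_def by (auto intro: sum_nonneg)
  have \<eta>sD: "\<eta> = sD powr (1/r)" unfolding \<eta>_def sD_def nrm_def ..
  have \<eta>0: "\<eta> \<ge> 0" unfolding \<eta>sD by simp
  have \<eta>r: "\<eta> powr r = sD" unfolding \<eta>sD using sD0 r0 by (simp add: powr_powr)
  have \<eta>1: "\<eta> \<le> 1"
  proof -
    have "sD \<le> 1" using sD0 sDT by linarith
    then have "sD powr (1/r) \<le> 1 powr (1/r)" using sD0 r0 by (intro powr_mono2) auto
    then show ?thesis unfolding \<eta>sD by simp
  qed
  define c where "c = u k"
  have uT: "u i = c" if "i \<in> T" for i
  proof -
    have "i > m d" "k > m d" using that km unfolding T_def by auto
    then have "zvec d m i = zvec d m k" using zc[of i] zc[of k] Lbig by simp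
    then show ?thesis unfolding u_def c_def using spF[OF zS, of i k] that k1 unfolding T_def by auto
  qed
  have c0: "c \<ge> 0" unfolding c_def using uS(2) k1 by auto
  define N where "N = real (k - m d)"
  have N: "N = real k - real (m d)" "N \<ge> 0" unfolding N_def using km by (auto simp: of_nat_diff)
  have cardT: "card T = k - m d" unfolding T_def by simp
  have sTc: "sT = N * c powr r"
    unfolding sT_def N_def using uT c0 cardT by simp
  define f where "f = 1 / real k powr (1/r)"
  have f0: "f > 0" unfolding f_def using k1 by simp
  have fr: "f powr r = 1 / real k" unfolding f_def using k1 r0 by (simp add: powr_divide powr_powr)
  have mdk_r: "real (m d) / real k \<le> 1 / real a"
  proof -
    have "a * m d \<le> a^2 * m d" using a2 by (intro mult_right_mono) (auto simp: power2_eq_square)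
    then have "real a * real (m d) \<le> real k" using mdk by (metis of_nat_le_iff of_nat_mult order_trans)
    then show ?thesis using a2 k1 by (simp add: field_simps)
  qed
  have partD: "nrm r D (\<lambda>i. u i - f) \<le> \<eta> + \<delta>"
  proof -
    have "nrm r D (\<lambda>i. u i - f) = nrm r D (\<lambda>i. u i + (- f))" by simp
    also have "\<dots> \<le> \<eta> + nrm r D (\<lambda>i. - f)" unfolding \<eta>_def
      by (rule mink) (use assms in \<open>auto simp: D_def\<close>)
    also have "nrm r D (\<lambda>i. - f) = (real (m d) / real k) powr (1/r)"
      unfolding nrm_def D_def using f0 fr by simp
    also have "\<dots> \<le> \<delta>" unfolding \<delta>_def using mdk_r r0 by (intro powr_mono2) auto
    finally show ?thesis by simp
  qed
  define X where "X = N powr (1/r) * c"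
  define Y where "Y = N powr (1/r) * f"
  have partT: "nrm r T (\<lambda>i. u i - f) = \<bar>X - Y\<bar>"
  proof -
    have "nrm r T (\<lambda>i. u i - f) = (N * \<bar>c - f\<bar> powr r) powr (1/r)"
      unfolding nrm_def N_def using uT cardT by simp
    also have "\<dots> = N powr (1/r) * \<bar>c - f\<bar>"
      using N r0 by (simp add: powr_mult powr_powr)
    also have "\<dots> = \<bar>X - Y\<bar>" unfolding X_def Y_def using N
      by (simp add: abs_mult right_diff_distrib[symmetric])
    finally show ?thesis .
  qed
  have X0: "X \<ge> 0" "Y \<ge> 0" unfolding X_def Y_def using c0 f0 by auto
  have Xr: "X powr r = 1 - \<eta> powr r"
    unfolding X_def using N c0 r0 sTc sDT \<eta>r by (simp add: powr_mult powr_powr)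
  have Yr: "Y powr r = N / real k"
    unfolding Y_def using N f0 r0 fr by (simp add: powr_mult powr_powr)
  have X1: "X \<le> 1"
    by (rule root_mono[of X 1 r]) (use X0 r0 Xr \<eta>0 in auto)
  have Y1: "Y \<le> 1"
  proof (rule root_mono[of Y 1 r])
    have "N \<le> real k" using N by simp
    then have "N / real k \<le> 1" using k1 by (simp add: divide_le_eq)
    then show "Y powr r \<le> 1 powr r" using Yr by simp
  qed (use X0 r0 in auto)
  have Xl: "1 - \<eta> \<le> X"
  proof (rule root_mono[of "1 - \<eta>" X r])
    have "(1 - \<eta>) powr r \<le> 1 - \<eta>" by (rule pw_le) (use \<eta>0 \<eta>1 assms in auto)
    also have "\<dots> \<le> 1 - \<eta> powr r" using pw_le[of \<eta> r] \<eta>0 \<eta>1 assms by simp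
    finally show "(1 - \<eta>) powr r \<le> X powr r" using Xr by simp
  qed (use \<eta>1 X0 r0 in auto)
  have Yl: "1 - 1 / real a \<le> Y"
  proof -
    have "Y powr r \<le> Y" by (rule pw_le) (use X0 Y1 assms in auto)
    moreover have "1 - 1 / real a \<le> N / real k" using mdk_r N k1 by (simp add: field_simps)
    ultimately show ?thesis using Yr by simp
  qed
  have "\<bar>X - Y\<bar> \<le> \<eta> + \<delta>" using X1 Y1 Xl Yl inva by linarith
  have "lp_norm r k (\<lambda>i. F (zvec d m) i - 1 / real k powr (1 / r)) = nrm r {1..k} (\<lambda>i. u i - f)"
    unfolding lp_norm_def nrm_def u_def f_def ..
  also have "\<dots> \<le> nrm r D (\<lambda>i. u i - f) + nrm r ({1..k} - D) (\<lambda>i. u i - f)"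
    by (rule nrm_split) (use assms in \<open>auto simp: D_def km less_imp_le\<close>)
  also have "\<dots> \<le> (\<eta> + \<delta>) + (\<eta> + \<delta>)"
    using partD partT \<open>\<bar>X - Y\<bar> \<le> \<eta> + \<delta>\<close> DT(3) by simp
  also have "\<dots> \<le> \<epsilon>" using \<eta>b \<delta>e assms by linarith
  finally show "lp_norm r k (\<lambda>i. F (zvec d m) i - 1 / real k powr (1 / r)) \<le> \<epsilon>" .
qed

end
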